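(* Let $K^{(1)},K^{(2)}$ be independent fractal percolations on $[0,1]$ with the same parameters $M\in\mathbb{N}_{\geq2}$ and $p\in[0,1]$, with construction steps $K^{(1)}_n,K^{(2)}_n$. Then for any $n\in\mathbb{N}_0$, $$\mathbb{E}V_1(K_n^{(1)}\cap K_n^{(2)})=p^{2n}$$ and $$\mathbb{E}V_0(K_n^{(1)}\cap K_n^{(2)})=(Mp^2)^n\left(3-2M^{-n}-4p\frac{M-1}{M-p}\left[1-\left(\frac pM\right)^n\right]+\frac{(M-1)p^2}{M-p^2}\left[1-\left(\frac{p^2}{M}\right)^n\right]\right).$$
   Context: Fractal percolation on $[0,1]$: $K_0=[0,1]$; given $K_{n-1}$, a union of closed grid intervals of length $M^{-(n-1)}$, each is divided into $M$ closed subintervals of length $M^{-n}$, each kept independently (of everything else) with probability $p$; $K_n$ is the union of kept subintervals. $V_1$ is length and $V_0$ the number of connected components of a finite union of compact intervals and points. *)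

theory Defs
  imports "HOL-Analysis.Analysis" "HOL-Probability.Probability"
begin

text \<open>The grid interval of level j with index i (0 \<le> i < M^j) is
  [i M^-j, (i+1) M^-j]; the coin xi (j,i) (j \<ge> 1) decides whether it is kept,
  given that its parent is kept. The level-n interval with index k survives
  in K_n iff all its ancestors (and itself) have coin True.\<close>

definition grid_interval :: "nat \<Rightarrow> nat \<Rightarrow> nat \<Rightarrow> real set" where
  "grid_interval M n k = {real k / real M ^ n .. (real k + 1) / real M ^ n}"

definition percol_step :: "nat \<Rightarrow> (nat \<times> nat \<Rightarrow> bool) \<Rightarrow> nat \<Rightarrow> real set" where
  "percol_step M xi n =
     \<Union> {grid_interval M n k | k. k < M ^ n \<and> (\<forall>j\<in>{1..n}. xi (j, k div M ^ (n - j)))}"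

definition V1 :: "real set \<Rightarrow> real" where
  "V1 S = measure lborel S"

definition V0 :: "real set \<Rightarrow> real" where
  "V0 S = real (card (components S))"

end

theory Submission
  imports Defs
begin

lemma grid_decomp:
  fixes D :: real and N :: nat
  assumes D: "D > 0" and y: "0 \<le> y" "y \<le> real N / D"
  shows "(\<exists>k\<le>N. y = real k / D) \<or> (\<exists>k<N. real k / D < y \<and> y < (real k + 1) / D)"
proof -
  define k where "k = nat \<lfloor>y * D\<rfloor>"
  have yD: "0 \<le> y * D" using y D by simp
  have k1: "real k \<le> y * D" unfolding k_def using yD by linarith
  have k2: "y * D < real k + 1" unfolding k_def using yD by linarith
  have yN: "y * D \<le> real N" using y D by (simp add: field_simps)
  show ?thesis
  proof (cases "real k = y * D")
    case True
    then have "k \<le> N" using yN by linarith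
    then show ?thesis using True D by (auto intro!: exI[of _ k] simp: field_simps)
  next
    case False
    then have "real k < y * D" using k1 by simp
    then have "k < N" using yN by linarith
    moreover have "real k / D < y" "y < (real k + 1) / D"
      using \<open>real k < y * D\<close> k2 D by (simp_all add: field_simps)
    ultimately show ?thesis by blast
  qed
qed

locale gridset =
  fixes S :: "real set" and D :: real and N :: nat and G e :: "nat \<Rightarrow> bool"
  assumes D: "D > 0"
    and sub: "S \<subseteq> {0 .. real N / D}"
    and grid: "\<And>k. k \<le> N \<Longrightarrow> real k / D \<in> S \<longleftrightarrow> G k"
    and opn: "\<And>k y. k < N \<Longrightarrow> real k / D < y \<Longrightarrow> y < (real k + 1) / D \<Longrightarrow> y \<in> S \<longleftrightarrow> e k"
    and cons: "\<And>k. k < N \<Longrightarrow> e k \<Longrightarrow> G k \<and> G (Suc k)"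
begin

definition L where "L k \<longleftrightarrow> k \<le> N \<and> G k \<and> \<not> (0 < k \<and> e (k - 1))"

lemma interval_in:
  assumes "k < N" "e k"
  shows "{real k / D .. (real k + 1) / D} \<subseteq> S"
proof
  fix y assume y: "y \<in> {real k / D .. (real k + 1) / D}"
  show "y \<in> S"
  proof (cases "y = real k / D")
    case True then show ?thesis using grid[of k] cons[OF assms] assms by simp
  next
    case False
    show ?thesis
    proof (cases "y = (real k + 1) / D")
      case True then show ?thesis using grid[of "Suc k"] cons[OF assms] assms by (simp add: add.commute)
    next
      case False
      then show ?thesis using opn[of k y] assms y \<open>y \<noteq> real k / D\<close> by auto
    qed
  qed
qed

lemma left_grid:
  assumes "k \<le> N" "G k"
  shows "\<exists>m\<le>k. L m \<and> {real m / D .. real k / D} \<subseteq> S"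
  using assms
proof (induction k)
  case 0
  then show ?case using grid[of 0] by (auto simp: L_def intro!: exI[of _ 0])
next
  case (Suc k)
  show ?case
  proof (cases "e k")
    case False
    then show ?thesis using Suc.prems grid[of "Suc k"] by (auto simp: L_def intro!: exI[of _ "Suc k"])
  next
    case True
    have kN: "k < N" using Suc.prems by simp
    then have "G k" using cons True by blast
    then obtain m where m: "m \<le> k" "L m" "{real m / D .. real k / D} \<subseteq> S"
      using Suc.IH kN by auto
    have "{real k / D .. (real k + 1) / D} \<subseteq> S" using interval_in kN True by blast
    then have "{real m / D .. real (Suc k) / D} \<subseteq> S" using m(3)
    proof -
      have "x \<in> S" if "x \<in> {real m / D .. real (Suc k) / D}" for x
        using that m(3) \<open>{real k / D .. (real k + 1) / D} \<subseteq> S\<close>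
        by (cases "x \<le> real k / D") (auto simp: add.commute)
      then show ?thesis by blast
    qed
    then show ?thesis using m by (intro exI[of _ m]) auto
  qed
qed

lemma left_any:
  assumes "y \<in> S"
  shows "\<exists>m. L m \<and> real m / D \<le> y \<and> {real m / D .. y} \<subseteq> S"
proof -
  have "0 \<le> y" "y \<le> real N / D" using sub assms by auto
  from grid_decomp[OF D this]
  show ?thesis
  proof
    assume "\<exists>k\<le>N. y = real k / D"
    then obtain k where k: "k \<le> N" "y = real k / D" by blast
    then have "G k" using grid assms by blast
    then obtain m where "m \<le> k" "L m" "{real m / D .. real k / D} \<subseteq> S" using left_grid k by blast
    moreover have "real m / D \<le> y" using \<open>m \<le> k\<close> k D by (simp add: divide_right_mono)
    ultimately show ?thesis using k by blast
  next
    assume "\<exists>k<N. real k / D < y \<and> y < (real k + 1) / D"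
    then obtain k where k: "k < N" "real k / D < y" "y < (real k + 1) / D" by blast
    then have ek: "e k" using opn assms by blast
    then have "G k" using cons k by blast
    have "k \<le> N" using k by simp
    then obtain m where m: "m \<le> k" "L m" "{real m / D .. real k / D} \<subseteq> S"
      using left_grid \<open>G k\<close> by blast
    have I: "{real k / D .. (real k + 1) / D} \<subseteq> S" using interval_in k ek by blast
    have "real m / D \<le> real k / D" using m(1) D by (simp add: divide_right_mono)
    have "{real m / D .. y} \<subseteq> S"
    proof
      fix z assume "z \<in> {real m / D .. y}"
      then show "z \<in> S" using m(3) I k(3) by (cases "z \<le> real k / D") auto
    qed
    then show ?thesis using m k \<open>real m / D \<le> real k / D\<close> by auto
  qed
qed

lemma gap:
  assumes "L m'" "m < m'"
  shows "\<not> {real m / D .. real m' / D} \<subseteq> S"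
proof
  assume H: "{real m / D .. real m' / D} \<subseteq> S"
  define z where "z = (real m' - 1/2) / D"
  have m'pos: "0 < m'" "m' \<le> N" using assms by (auto simp: L_def)
  have ne: "\<not> e (m' - 1)" using assms m'pos by (auto simp: L_def)
  have r: "real (m' - 1) = real m' - 1" using m'pos by simp
  have "real m \<le> real m' - 1" using assms by simp
  then have "z \<in> {real m / D .. real m' / D}" unfolding z_def using D
    by (auto simp: field_simps)
  then have "z \<in> S" using H by blast
  moreover have "real (m' - 1) / D < z" "z < (real (m' - 1) + 1) / D"
    unfolding z_def r using D by (simp_all add: field_simps)
  ultimately have "e (m' - 1)" using opn[of "m' - 1" z] m'pos by simp
  then show False using ne by simp
qed

lemma card_components: "card (components S) = card {k. L k}"
proof -
  define f where "f k = connected_component_set S (real k / D)" for k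
  have LS: "L k \<Longrightarrow> real k / D \<in> S" for k using grid by (auto simp: L_def)
  have inj: "inj_on f {k. L k}"
  proof (rule inj_onI)
    fix a b assume a: "a \<in> {k. L k}" and b: "b \<in> {k. L k}" and fe: "f a = f b"
    show "a = b"
    proof (rule ccontr)
      assume "a \<noteq> b"
      then consider "a < b" | "b < a" by linarith
      then show False
      proof cases
        case 1
        have "real b / D \<in> f b" using LS b by (simp add: f_def connected_component_refl)
        then have "real b / D \<in> f a" using fe by simp
        moreover have "real a / D \<in> f a" using LS a by (simp add: f_def connected_component_refl)
        moreover have "is_interval (f a)" unfolding f_def
          using is_interval_connected_1 connected_connected_component by blast
        ultimately have "{real a / D .. real b / D} \<subseteq> f a"
        proof -
          assume B: "real b / D \<in> f a" and A: "real a / D \<in> f a" and iv: "is_interval (f a)"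
          have iv': "\<And>u v z. u \<in> f a \<Longrightarrow> v \<in> f a \<Longrightarrow> u \<le> z \<Longrightarrow> z \<le> v \<Longrightarrow> z \<in> f a"
            using iv unfolding is_interval_1 by blast
          show ?thesis using iv'[OF A B] by auto
        qed
        also have "f a \<subseteq> S" unfolding f_def by (rule connected_component_subset)
        finally show False using gap b 1 by auto
      next
        case 2
        have "real a / D \<in> f a" using LS a by (simp add: f_def connected_component_refl)
        then have "real a / D \<in> f b" using fe by simp
        moreover have "real b / D \<in> f b" using LS b by (simp add: f_def connected_component_refl)
        moreover have "is_interval (f b)" unfolding f_def
          using is_interval_connected_1 connected_connected_component by blast
        ultimately have "{real b / D .. real a / D} \<subseteq> f b"
        proof -
          assume B: "real a / D \<in> f b" and A: "real b / D \<in> f b" and iv: "is_interval (f b)"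
          have iv': "\<And>u v z. u \<in> f b \<Longrightarrow> v \<in> f b \<Longrightarrow> u \<le> z \<Longrightarrow> z \<le> v \<Longrightarrow> z \<in> f b"
            using iv unfolding is_interval_1 by blast
          show ?thesis using iv'[OF A B] by auto
        qed
        also have "f b \<subseteq> S" unfolding f_def by (rule connected_component_subset)
        finally show False using gap a 2 by auto
      qed
    qed
  qed
  have img: "f ` {k. L k} = components S"
  proof
    show "f ` {k. L k} \<subseteq> components S"
    proof
      fix C assume "C \<in> f ` {k. L k}"
      then obtain k where "L k" "C = f k" by blast
      then show "C \<in> components S" unfolding components_iff f_def using LS by blast
    qed
  next
    show "components S \<subseteq> f ` {k. L k}"
    proof
      fix C assume "C \<in> components S"
      then obtain y where y: "y \<in> S" "C = connected_component_set S y" by (auto simp: components_iff)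
      obtain m where m: "L m" "real m / D \<le> y" "{real m / D .. y} \<subseteq> S" using left_any y by blast
      have "connected_component S y (real m / D)" unfolding connected_component_def
      proof (intro exI[of _ "{real m / D .. y}"] conjI)
        show "connected {real m / D .. y}" by simp
        show "{real m / D .. y} \<subseteq> S" by (rule m(3))
        show "y \<in> {real m / D .. y}" using m(2) by simp
        show "real m / D \<in> {real m / D .. y}" using m(2) by simp
      qed
      then have "real m / D \<in> connected_component_set S y" by simp
      then have "connected_component_set S (real m / D) = connected_component_set S y"
        by (rule connected_component_eq)
      then have "C = f m" using y unfolding f_def by simp
      then show "C \<in> f ` {k. L k}" using m by blast
    qed
  qed
  show ?thesis using card_image[OF inj] img by simp
qed

lemma measure_S: "measure lborel S = (\<Sum>k<N. if e k then 1 / D else 0)"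
proof -
  define U where "U = (\<Union>k\<in>{k. k < N \<and> e k}. {real k / D .. (real k + 1) / D})"
  have US: "U \<subseteq> S" unfolding U_def using interval_in by blast
  have "S - U \<subseteq> (\<lambda>k. real k / D) ` {..N}"
  proof
    fix y assume y: "y \<in> S - U"
    then have "0 \<le> y" "y \<le> real N / D" using sub by auto
    from grid_decomp[OF D this] show "y \<in> (\<lambda>k. real k / D) ` {..N}"
    proof
      assume "\<exists>k<N. real k / D < y \<and> y < (real k + 1) / D"
      then obtain k where k: "k < N" "real k / D < y" "y < (real k + 1) / D" by blast
      then have "e k" using opn y by blast
      then have "y \<in> U" unfolding U_def using k by auto
      then show ?thesis using y by blast
    qed auto
  qed
  then have fin: "finite (S - U)" by (rule finite_subset) auto
  have SU: "S = U \<union> (S - U)" using US by blast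
  have Umeas: "U \<in> sets lborel" unfolding U_def by auto
  have "measure lborel S = measure lborel U"
    using SU measure_Un_null_set[OF Umeas finite_imp_null_set_lborel[OF fin]] by metis
  also have "\<dots> = (\<Sum>k\<in>{k. k < N \<and> e k}. measure lborel {real k / D .. (real k + 1) / D})"
    unfolding U_def
  proof (rule measure_UNION_AE)
    show "finite {k. k < N \<and> e k}" by simp
    show "{real k / D .. (real k + 1) / D} \<in> fmeasurable lborel" for k
      by (rule fmeasurable_compact) (rule compact_Icc)
    show "pairwise (\<lambda>i j. AE x in lborel. x \<notin> {real (i::nat) / D..(real i + 1) / D} \<or>
                   x \<notin> {real j / D..(real j + 1) / D}) {k. k < N \<and> e k}"
    proof (rule pairwiseI)
      fix i j :: nat assume "i \<noteq> j"
      have "{x. \<not> (x \<notin> {real i / D..(real i + 1) / D} \<or> x \<notin> {real j / D..(real j + 1) / D})}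
            \<subseteq> {real i / D, (real i + 1) / D}"
      proof
        fix x assume x: "x \<in> {x. \<not> (x \<notin> {real i / D..(real i + 1) / D} \<or> x \<notin> {real j / D..(real j + 1) / D})}"
        then have "real i \<le> x * D" "x * D \<le> real i + 1" "real j \<le> x * D" "x * D \<le> real j + 1"
          using D by (auto simp: field_simps)
        moreover have "real i + 1 \<le> real j \<or> real j + 1 \<le> real i" using \<open>i \<noteq> j\<close>
          by (metis linorder_neqE_nat Suc_leI of_nat_Suc of_nat_le_iff add.commute)
        ultimately have "x * D = real i \<or> x * D = real i + 1"
          by linarith
        then show "x \<in> {real i / D, (real i + 1) / D}" using D by (auto simp: field_simps)
      qed
      then show "AE x in lborel. x \<notin> {real i / D..(real i + 1) / D} \<or> x \<notin> {real j / D..(real j + 1) / D}"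
        by (intro AE_I'[OF finite_imp_null_set_lborel[of "{real i / D, (real i + 1) / D}"]]) auto
    qed
  qed
  also have "\<dots> = (\<Sum>k\<in>{k. k < N \<and> e k}. 1 / D)"
    using D by (intro sum.cong) (auto simp: field_simps)
  also have "\<dots> = (\<Sum>k<N. if e k then 1 / D else 0)"
    by (simp add: sum.If_cases Int_def conj_commute)
  finally show ?thesis .
qed

end

definition Uset :: "real \<Rightarrow> nat \<Rightarrow> (nat \<Rightarrow> bool) \<Rightarrow> real set" where
  "Uset D N a = \<Union> {{real k / D .. (real k + 1) / D} | k. k < N \<and> a k}"

lemma Uset_mem: "y \<in> Uset D N a \<longleftrightarrow> (\<exists>k<N. a k \<and> real k / D \<le> y \<and> y \<le> (real k + 1) / D)"
  unfolding Uset_def by auto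

lemma gridset_inter:
  assumes D: "D > 0"
  shows "gridset (Uset D N a \<inter> Uset D N b) D N
     (\<lambda>k. (k < N \<and> a k \<or> 0 < k \<and> a (k - 1)) \<and> (k < N \<and> b k \<or> 0 < k \<and> b (k - 1)))
     (\<lambda>k. a k \<and> b k)"
proof -
  have gp: "real k / D \<le> real m / D \<and> real m / D \<le> (real k + 1) / D \<longleftrightarrow> (m = k \<or> m = k + 1)"
    for k m
  proof -
    have "real k / D \<le> real m / D \<longleftrightarrow> k \<le> m" using D by (simp add: divide_le_cancel)
    moreover have "real m / D \<le> (real k + 1) / D \<longleftrightarrow> m \<le> k + 1"
      using D by (simp add: divide_le_cancel) (metis Suc_eq_plus1 of_nat_1 of_nat_add of_nat_le_iff)
    ultimately show ?thesis by auto
  qed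
  have grid1: "real m / D \<in> Uset D N c \<longleftrightarrow> (m < N \<and> c m \<or> 0 < m \<and> c (m - 1))"
    if "m \<le> N" for m c
  proof -
    have "real m / D \<in> Uset D N c \<longleftrightarrow> (\<exists>k<N. c k \<and> (m = k \<or> m = k + 1))"
      unfolding Uset_mem gp ..
    also have "\<dots> \<longleftrightarrow> (m < N \<and> c m \<or> 0 < m \<and> c (m - 1))"
    proof
      assume "\<exists>k<N. c k \<and> (m = k \<or> m = k + 1)"
      then obtain k where "k < N" "c k" "m = k \<or> m = k + 1" by blast
      then show "m < N \<and> c m \<or> 0 < m \<and> c (m - 1)" by auto
    next
      assume "m < N \<and> c m \<or> 0 < m \<and> c (m - 1)"
      then show "\<exists>k<N. c k \<and> (m = k \<or> m = k + 1)"
      proof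
        assume "0 < m \<and> c (m - 1)"
        then show ?thesis using that by (intro exI[of _ "m - 1"]) auto
      qed blast
    qed
    finally show ?thesis .
  qed
  have op1: "y \<in> Uset D N c \<longleftrightarrow> c m"
    if "m < N" "real m / D < y" "y < (real m + 1) / D" for m y c
  proof -
    have "(real k / D \<le> y \<and> y \<le> (real k + 1) / D) \<longleftrightarrow> k = m" for k
    proof
      assume "real k / D \<le> y \<and> y \<le> (real k + 1) / D"
      then have "real k < real m + 1" "real m < real k + 1" using that D
        by (auto simp: field_simps)
      then show "k = m" by linarith
    qed (use that in auto)
    then show ?thesis unfolding Uset_mem using that by auto
  qed
  show ?thesis
  proof
    show "D > 0" by fact
    show "Uset D N a \<inter> Uset D N b \<subseteq> {0..real N / D}"
    proof
      fix y assume "y \<in> Uset D N a \<inter> Uset D N b"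
      then obtain k where "k < N" "real k / D \<le> y" "y \<le> (real k + 1) / D" by (auto simp: Uset_mem)
      moreover have "0 \<le> real k / D" "(real k + 1) / D \<le> real N / D" using D \<open>k < N\<close>
        by (auto simp: divide_right_mono)
      ultimately show "y \<in> {0..real N / D}" by auto
    qed
    show "real k / D \<in> Uset D N a \<inter> Uset D N b \<longleftrightarrow>
      (k < N \<and> a k \<or> 0 < k \<and> a (k - 1)) \<and> (k < N \<and> b k \<or> 0 < k \<and> b (k - 1))"
      if "k \<le> N" for k
      using grid1[OF that, of a] grid1[OF that, of b] by simp
    show "y \<in> Uset D N a \<inter> Uset D N b \<longleftrightarrow> a k \<and> b k"
      if "k < N" "real k / D < y" "y < (real k + 1) / D" for k y
      using op1[OF that, of a] op1[OF that, of b] by simp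
    show "((k < N \<and> a k \<or> 0 < k \<and> a (k - 1)) \<and> (k < N \<and> b k \<or> 0 < k \<and> b (k - 1))) \<and>
          ((Suc k < N \<and> a (Suc k) \<or> 0 < Suc k \<and> a (Suc k - 1)) \<and> (Suc k < N \<and> b (Suc k) \<or> 0 < Suc k \<and> b (Suc k - 1)))"
      if "k < N" "a k \<and> b k" for k
      using that by simp
  qed
qed

definition sc :: "nat \<Rightarrow> nat \<Rightarrow> nat \<Rightarrow> nat" where
  "sc M n k = card {j \<in> {1..n}. (k - 1) div M ^ (n - j) = k div M ^ (n - j)}"

lemma sum_split_mult:
  fixes f :: "nat \<Rightarrow> 'a::comm_monoid_add"
  shows "(\<Sum>k<M * N. f k) = (\<Sum>a<N. \<Sum>b<M. f (M * a + b))"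
proof (induction N)
  case 0 then show ?case by simp
next
  case (Suc N)
  have "(\<Sum>k<M * Suc N. f k) = (\<Sum>k<M * N. f k) + (\<Sum>k\<in>{M * N..<M * N + M}. f k)"
    by (simp add: lessThan_atLeast0 sum.atLeastLessThan_concat add.commute)
  also have "(\<Sum>k\<in>{M * N..<M * N + M}. f k) = (\<Sum>b<M. f (M * N + b))"
    using sum.shift_bounds_nat_ivl[of f 0 "M * N" M]
    by (simp add: lessThan_atLeast0 add.commute)
  finally show ?case using Suc by simp
qed

lemma sc_nonzero:
  assumes M: "M \<ge> 2" and b: "1 \<le> b" "b < M"
  shows "sc M (Suc n) (M * a + b) = n"
proof -
  have "{j \<in> {1..Suc n}. (M * a + b - 1) div M ^ (Suc n - j) = (M * a + b) div M ^ (Suc n - j)} = {1..n}"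
  proof (intro set_eqI iffI)
    fix j assume j: "j \<in> {j \<in> {1..Suc n}. (M * a + b - 1) div M ^ (Suc n - j) = (M * a + b) div M ^ (Suc n - j)}"
    show "j \<in> {1..n}"
    proof (rule ccontr)
      assume "j \<notin> {1..n}"
      then have "j = Suc n" using j by auto
      then show False using j b by simp
    qed
  next
    fix j assume j: "j \<in> {1..n}"
    then have e: "Suc n - j = Suc (n - j)" by auto
    have d1: "(M * a + b - 1) div M = a" using b by (simp add: div_add1_eq[of "M*a" "b-1" M, symmetric]
         flip: Nat.add_diff_assoc)
    have d2: "(M * a + b) div M = a" using b by simp
    show "j \<in> {j \<in> {1..Suc n}. (M * a + b - 1) div M ^ (Suc n - j) = (M * a + b) div M ^ (Suc n - j)}"
      using j d1 d2 by (simp add: e div_mult2_eq)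
  qed
  then show ?thesis unfolding sc_def by simp
qed

lemma sc_zero:
  assumes M: "M \<ge> 2" and a: "1 \<le> a"
  shows "sc M (Suc n) (M * a) = sc M n a"
proof -
  have d1: "(M * a - 1) div M = a - 1"
  proof -
    obtain a' where a': "a = Suc a'" using a by (cases a) auto
    have e1: "M * a - 1 = (M - 1) + (a - 1) * M" using M by (simp add: a' mult_Suc_right mult.commute)
    have "(M - 1 + (a - 1) * M) div M = (a - 1) + (M - 1) div M"
      by (rule div_mult_self1) (use M in simp)
    moreover have "(M - 1) div M = 0" using M by simp
    ultimately show ?thesis using e1 by simp
  qed
  have "{j \<in> {1..Suc n}. (M * a - 1) div M ^ (Suc n - j) = (M * a) div M ^ (Suc n - j)}
      = {j \<in> {1..n}. (a - 1) div M ^ (n - j) = a div M ^ (n - j)}"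
  proof (intro set_eqI iffI)
    fix j assume j: "j \<in> {j \<in> {1..Suc n}. (M * a - 1) div M ^ (Suc n - j) = (M * a) div M ^ (Suc n - j)}"
    have "j \<noteq> Suc n"
    proof
      assume "j = Suc n"
      then show False using j a M by (cases "M * a") auto
    qed
    then have jn: "j \<in> {1..n}" using j by auto
    then have e: "Suc n - j = Suc (n - j)" by auto
    show "j \<in> {j \<in> {1..n}. (a - 1) div M ^ (n - j) = a div M ^ (n - j)}"
      using j jn d1 M by (simp add: e div_mult2_eq)
  next
    fix j assume j: "j \<in> {j \<in> {1..n}. (a - 1) div M ^ (n - j) = a div M ^ (n - j)}"
    then have e: "Suc n - j = Suc (n - j)" by auto
    show "j \<in> {j \<in> {1..Suc n}. (M * a - 1) div M ^ (Suc n - j) = (M * a) div M ^ (Suc n - j)}"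
      using j d1 M by (simp add: e div_mult2_eq)
  qed
  then show ?thesis unfolding sc_def by simp
qed

lemma sc_le: "sc M n k \<le> n"
proof -
  have "sc M n k \<le> card {1..n}" unfolding sc_def by (intro card_mono) auto
  then show ?thesis by simp
qed

lemma H_closed:
  fixes x :: real
  assumes M: "M \<ge> 2"
  shows "(\<Sum>k\<in>{1..<M ^ n}. x ^ (n - sc M n k)) = (\<Sum>i<n. (real M - 1) * real M ^ i * x ^ (n - i))"
proof (induction n)
  case 0 then show ?case by simp
next
  case (Suc n)
  define f where "f k = (if k = 0 then 0 else x ^ (Suc n - sc M (Suc n) k))" for k
  have "(\<Sum>k\<in>{1..<M ^ Suc n}. x ^ (Suc n - sc M (Suc n) k)) = (\<Sum>k<M * M ^ n. f k)"
  proof -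
    have "(\<Sum>k<M * M ^ n. f k) = (\<Sum>k\<in>{0..<M ^ Suc n}. f k)" by (simp add: lessThan_atLeast0)
    also have "\<dots> = f 0 + (\<Sum>k\<in>{Suc 0..<M ^ Suc n}. f k)"
      using M by (intro sum.atLeast_Suc_lessThan) simp
    also have "\<dots> = (\<Sum>k\<in>{1..<M ^ Suc n}. x ^ (Suc n - sc M (Suc n) k))"
      by (simp add: f_def)
    finally show ?thesis by simp
  qed
  also have "\<dots> = (\<Sum>a<M ^ n. \<Sum>b<M. f (M * a + b))" by (rule sum_split_mult)
  also have "\<dots> = (\<Sum>a<M ^ n. f (M * a) + (real M - 1) * x)"
  proof (rule sum.cong[OF refl])
    fix a assume "a \<in> {..<M ^ n}"
    have "(\<Sum>b<M. f (M * a + b)) = f (M * a) + (\<Sum>b\<in>{Suc 0..<M}. f (M * a + b))"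
      using M by (simp add: lessThan_atLeast0 sum.atLeast_Suc_lessThan)
    also have "(\<Sum>b\<in>{Suc 0..<M}. f (M * a + b)) = (\<Sum>b\<in>{Suc 0..<M}. x)"
    proof (rule sum.cong[OF refl])
      fix b assume b: "b \<in> {Suc 0..<M}"
      then have "M * a + b \<noteq> 0" by auto
      then show "f (M * a + b) = x" using sc_nonzero[OF M, of b n a] b by (simp add: f_def)
    qed
    also have "\<dots> = (real M - 1) * x" using M by (simp add: of_nat_diff)
    finally show "(\<Sum>b<M. f (M * a + b)) = f (M * a) + (real M - 1) * x" .
  qed
  also have "\<dots> = (\<Sum>a<M ^ n. f (M * a)) + real (M ^ n) * ((real M - 1) * x)"
    by (simp add: sum.distrib)
  also have "(\<Sum>a<M ^ n. f (M * a)) = x * (\<Sum>k\<in>{1..<M ^ n}. x ^ (n - sc M n k))"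
  proof -
    have "(\<Sum>a<M ^ n. f (M * a)) = (\<Sum>a\<in>{0..<M ^ n}. f (M * a))" by (simp add: lessThan_atLeast0)
    also have "\<dots> = f 0 + (\<Sum>a\<in>{Suc 0..<M ^ n}. f (M * a))"
      using M by (subst sum.atLeast_Suc_lessThan) auto
    also have "\<dots> = (\<Sum>a\<in>{1..<M ^ n}. x * x ^ (n - sc M n a))"
    proof -
      have "f (M * a) = x * x ^ (n - sc M n a)" if "a \<in> {Suc 0..<M ^ n}" for a
      proof -
        have "M * a \<noteq> 0" using that M by auto
        moreover have "Suc n - sc M n a = Suc (n - sc M n a)" using sc_le[of M n a] by auto
        ultimately show ?thesis using sc_zero[OF M, of a n] that by (simp add: f_def)
      qed
      then show ?thesis by (simp add: f_def)
    qed
    finally show ?thesis by (simp add: sum_distrib_left)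
  qed
  also have "x * (\<Sum>k\<in>{1..<M ^ n}. x ^ (n - sc M n k)) + real (M ^ n) * ((real M - 1) * x)
      = (\<Sum>i<Suc n. (real M - 1) * real M ^ i * x ^ (Suc n - i))"
  proof -
    have "(\<Sum>i<Suc n. (real M - 1) * real M ^ i * x ^ (Suc n - i))
        = (\<Sum>i<n. (real M - 1) * real M ^ i * x ^ (Suc n - i)) + (real M - 1) * real M ^ n * x"
      by simp
    also have "(\<Sum>i<n. (real M - 1) * real M ^ i * x ^ (Suc n - i)) = x * (\<Sum>i<n. (real M - 1) * real M ^ i * x ^ (n - i))"
      by (simp add: sum_distrib_left Suc_diff_le less_imp_le mult_ac)
    finally show ?thesis using Suc.IH by (simp add: mult_ac)
  qed
  finally show ?case .
qed

lemma geo_closed: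
  fixes x :: real
  shows "(real M - x) * (\<Sum>i<n. real M ^ i * x ^ (n - i)) = x * (real M ^ n - x ^ n)"
proof (induction n)
  case 0 then show ?case by simp
next
  case (Suc n)
  have "(\<Sum>i<Suc n. real M ^ i * x ^ (Suc n - i)) = x * (\<Sum>i<n. real M ^ i * x ^ (n - i)) + real M ^ n * x"
    by (simp add: sum_distrib_left Suc_diff_le less_imp_le mult_ac)
  then have "(real M - x) * (\<Sum>i<Suc n. real M ^ i * x ^ (Suc n - i))
      = x * ((real M - x) * (\<Sum>i<n. real M ^ i * x ^ (n - i))) + (real M - x) * real M ^ n * x"
    by (simp add: algebra_simps)
  also have "\<dots> = x * (real M ^ Suc n - x ^ Suc n)"
    unfolding Suc.IH by (simp add: algebra_simps)
  finally show ?case .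
qed

lemma H_form:
  fixes x :: real
  assumes "x \<noteq> real M"
  shows "(\<Sum>i<n. (real M - 1) * real M ^ i * x ^ (n - i)) = (real M - 1) * x * (real M ^ n - x ^ n) / (real M - x)"
proof -
  have "(\<Sum>i<n. (real M - 1) * real M ^ i * x ^ (n - i)) = (real M - 1) * (\<Sum>i<n. real M ^ i * x ^ (n - i))"
    by (simp add: sum_distrib_left mult_ac)
  also have "(\<Sum>i<n. real M ^ i * x ^ (n - i)) = x * (real M ^ n - x ^ n) / (real M - x)"
    using geo_closed[of M x n] assms by (simp add: field_simps)
  finally show ?thesis by simp
qed

lemma alg_gen:
  fixes m q q2 a p p2 d1 d2 :: real
  assumes "m > 0" "d1 \<noteq> 0" "d2 \<noteq> 0"
  shows "q2 + q2 * (3 * (m - 1) - 4 * (a * p * (m - q) / d1) + a * p2 * (m - q2) / d2)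
    = (m * q2) * (3 - 2 / m - 4 * p * a / d1 * (1 - q / m) + a * p2 / d2 * (1 - q2 / m))"
  using assms by (simp add: field_simps)

lemma final_alg:
  fixes p :: real
  assumes M: "M \<ge> 2" and p: "0 \<le> p" "p \<le> 1"
  shows "p ^ (2 * n) + p ^ (2 * n) * (3 * (real M ^ n - 1)
            - 4 * ((real M - 1) * p * (real M ^ n - p ^ n) / (real M - p))
            + (real M - 1) * p\<^sup>2 * (real M ^ n - (p\<^sup>2) ^ n) / (real M - p\<^sup>2))
    = (real M * p^2) ^ n *
           (3 - 2 / real M ^ n
              - 4 * p * (real M - 1) / (real M - p) * (1 - (p / real M) ^ n)
              + (real M - 1) * p^2 / (real M - p^2) * (1 - (p^2 / real M) ^ n))"
proof -
  define m where "m = real M ^ n"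
  have m: "m > 0" using M by (simp add: m_def)
  have Mp: "real M - p \<noteq> 0" using M p by simp
  have p2: "p\<^sup>2 \<le> 1" using p by (simp add: power_le_one)
  have Mp2: "real M - p\<^sup>2 \<noteq> 0" using M p2 by simp
  have e0: "(p\<^sup>2) ^ n = p ^ (2 * n)" by (simp add: power_mult)
  have e1: "(real M * p^2) ^ n = m * p ^ (2 * n)" by (simp add: m_def power_mult_distrib power_mult)
  have e2: "(p / real M) ^ n = p ^ n / m" by (simp add: m_def power_divide)
  have e3: "(p^2 / real M) ^ n = p ^ (2 * n) / m" by (simp add: m_def power_divide e0)
  show ?thesis unfolding e0 e1 e2 e3 m_def[symmetric]
    by (rule alg_gen[OF m Mp Mp2])
qed

lemma (in prob_space) prob_Un3:
  "A \<in> events \<Longrightarrow> B \<in> events \<Longrightarrow> prob (A \<union> B) = prob A + prob B - prob (A \<inter> B)"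
  by (rule measure_Un3) (auto simp: fmeasurable_eq_sets)

lemma (in prob_space) prod_union:
  assumes ev: "A1 \<in> events" "B1 \<in> events" "A2 \<in> events" "B2 \<in> events"
    and ind: "\<And>U V. U \<in> {A1, B1, A1 \<inter> B1} \<Longrightarrow> V \<in> {A2, B2, A2 \<inter> B2} \<Longrightarrow>
      prob (U \<inter> V) = prob U * prob V"
  shows "prob ((A1 \<union> B1) \<inter> (A2 \<union> B2)) = prob (A1 \<union> B1) * prob (A2 \<union> B2)"
proof -
  define Z where "Z = A2 \<union> B2"
  have Z: "Z \<in> events" using ev by (simp add: Z_def)
  have U: "prob (U \<inter> Z) = prob U * prob Z" if "U \<in> {A1, B1, A1 \<inter> B1}" for U
  proof -
    have Ue: "U \<in> events" using that ev by auto
    have "U \<inter> Z = (U \<inter> A2) \<union> (U \<inter> B2)" by (auto simp: Z_def)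
    then have "prob (U \<inter> Z) = prob (U \<inter> A2) + prob (U \<inter> B2) - prob ((U \<inter> A2) \<inter> (U \<inter> B2))"
      using prob_Un3 Ue ev by auto
    also have "(U \<inter> A2) \<inter> (U \<inter> B2) = U \<inter> (A2 \<inter> B2)" by auto
    also have "prob (U \<inter> A2) + prob (U \<inter> B2) - prob (U \<inter> (A2 \<inter> B2))
        = prob U * (prob A2 + prob B2 - prob (A2 \<inter> B2))"
      using ind[OF that] by (simp add: algebra_simps)
    also have "prob A2 + prob B2 - prob (A2 \<inter> B2) = prob Z"
      unfolding Z_def using prob_Un3 ev by simp
    finally show ?thesis .
  qed
  have "(A1 \<union> B1) \<inter> Z = (A1 \<inter> Z) \<union> (B1 \<inter> Z)" by auto
  then have "prob ((A1 \<union> B1) \<inter> Z) = prob (A1 \<inter> Z) + prob (B1 \<inter> Z) - prob ((A1 \<inter> Z) \<inter> (B1 \<inter> Z))"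
    using prob_Un3 Z ev by auto
  also have "(A1 \<inter> Z) \<inter> (B1 \<inter> Z) = (A1 \<inter> B1) \<inter> Z" by auto
  also have "prob (A1 \<inter> Z) + prob (B1 \<inter> Z) - prob ((A1 \<inter> B1) \<inter> Z)
      = (prob A1 + prob B1 - prob (A1 \<inter> B1)) * prob Z"
    using U[of A1] U[of B1] U[of "A1 \<inter> B1"] by (simp add: algebra_simps)
  also have "prob A1 + prob B1 - prob (A1 \<inter> B1) = prob (A1 \<union> B1)"
    using prob_Un3 ev by simp
  finally show ?thesis by (simp add: Z_def)
qed

locale perc = prob_space P for P :: "'a measure" +
  fixes M :: nat and p :: real and xi :: "nat \<Rightarrow> nat \<times> nat \<Rightarrow> 'a \<Rightarrow> bool" and n :: nat
  assumes M2: "M \<ge> 2" and p0: "0 \<le> p" and p1: "p \<le> 1"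
  and ind: "indep_vars (\<lambda>_. count_space UNIV) (\<lambda>(c, j, i). xi c (j, i))
           {(c, j, i). c \<in> {1, 2} \<and> 1 \<le> j \<and> i < M ^ j}"
  and prb: "\<And>c j i. c \<in> {1, 2} \<Longrightarrow> 1 \<le> j \<Longrightarrow> i < M ^ j \<Longrightarrow>
           measure P {\<omega> \<in> space P. xi c (j, i) \<omega>} = p"
begin

definition IX :: "(nat \<times> nat \<times> nat) set" where
  "IX = {(c, j, i). c \<in> {1, 2} \<and> 1 \<le> j \<and> i < M ^ j}"

definition X :: "nat \<times> nat \<times> nat \<Rightarrow> 'a \<Rightarrow> bool" where
  "X = (\<lambda>(c, j, i). xi c (j, i))"

definition cyl :: "(nat \<times> nat \<times> nat) set \<Rightarrow> 'a set" where
  "cyl J = {\<omega> \<in> space P. \<forall>x\<in>J. X x \<omega>}"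

lemma coin_set: "X x -` {True} \<inter> space P = {\<omega> \<in> space P. X x \<omega>}"
  by auto

lemma coin_event: "x \<in> IX \<Longrightarrow> {\<omega> \<in> space P. X x \<omega>} \<in> events"
proof -
  assume x: "x \<in> IX"
  have "random_variable (count_space UNIV) (X x)"
    using ind x unfolding indep_vars_def IX_def X_def by blast
  then have "X x -` {True} \<inter> space P \<in> events" by (rule measurable_sets) simp
  then show ?thesis by (simp add: coin_set)
qed

lemma coin_prob: "x \<in> IX \<Longrightarrow> prob {\<omega> \<in> space P. X x \<omega>} = p"
  by (cases x) (auto simp: IX_def X_def intro!: prb)

lemma cyl_Int: "cyl A \<inter> cyl B = cyl (A \<union> B)"
  by (auto simp: cyl_def)

lemma cyl_eq: "J \<noteq> {} \<Longrightarrow> cyl J = (\<Inter>x\<in>J. X x -` {True} \<inter> space P)"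
  by (auto simp: cyl_def)

lemma cyl_events: "finite J \<Longrightarrow> J \<subseteq> IX \<Longrightarrow> cyl J \<in> events"
proof (cases "J = {}")
  case True then show ?thesis by (simp add: cyl_def)
next
  case False
  assume "finite J" "J \<subseteq> IX"
  then show ?thesis unfolding cyl_eq[OF False] coin_set
    using False coin_event by (intro sets.finite_INT) auto
qed

lemma cyl_prob: "finite J \<Longrightarrow> J \<subseteq> IX \<Longrightarrow> prob (cyl J) = p ^ card J"
proof (cases "J = {}")
  case True then show ?thesis by (simp add: cyl_def prob_space)
next
  case False
  assume J: "finite J" "J \<subseteq> IX"
  have "prob (cyl J) = (\<Prod>x\<in>J. prob (X x -` {True} \<inter> space P))"
    unfolding cyl_eq[OF False]
    using ind J False unfolding X_def IX_def
    by (intro indep_varsD) auto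
  also have "\<dots> = (\<Prod>x\<in>J. p)"
    using J by (intro prod.cong) (auto simp: coin_set coin_prob)
  finally show ?thesis by simp
qed

definition JK :: "nat \<Rightarrow> nat \<Rightarrow> (nat \<times> nat \<times> nat) set" where
  "JK c k = (\<lambda>j. (c, j, k div M ^ (n - j))) ` {1..n}"

lemma JK_fin: "finite (JK c k)"
  by (simp add: JK_def)

lemma JK_sub: "c \<in> {1, 2} \<Longrightarrow> k < M ^ n \<Longrightarrow> JK c k \<subseteq> IX"
proof
  fix x assume c: "c \<in> {1, 2}" and k: "k < M ^ n" and x: "x \<in> JK c k"
  then obtain j where j: "j \<in> {1..n}" "x = (c, j, k div M ^ (n - j))" by (auto simp: JK_def)
  have Mpos: "0 < M ^ (n - j)" using M2 by simp
  have "M ^ n = M ^ j * M ^ (n - j)" using j by (simp flip: power_add)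
  then have "k div M ^ (n - j) < M ^ j" using k Mpos by (simp add: div_less_iff_less_mult)
  then show "x \<in> IX" using j c by (auto simp: IX_def)
qed

lemma JK_card: "card (JK c k) = n"
proof -
  have "inj_on (\<lambda>j. (c, j, k div M ^ (n - j))) {1..n}" by (auto simp: inj_on_def)
  then show ?thesis by (simp add: JK_def card_image)
qed

lemma JK_disj: "c \<noteq> c' \<Longrightarrow> JK c k \<inter> JK c' k' = {}"
  by (auto simp: JK_def)

lemma JK_Int: "card (JK c (k - 1) \<inter> JK c k) = sc M n k"
proof -
  have "JK c (k - 1) \<inter> JK c k = (\<lambda>j. (c, j, k div M ^ (n - j))) `
          {j \<in> {1..n}. (k - 1) div M ^ (n - j) = k div M ^ (n - j)}"
    by (auto simp: JK_def image_iff)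
  moreover have "inj_on (\<lambda>j. (c, j, k div M ^ (n - j))) {j \<in> {1..n}. (k - 1) div M ^ (n - j) = k div M ^ (n - j)}"
    by (auto simp: inj_on_def)
  ultimately show ?thesis by (simp add: sc_def card_image)
qed

lemma JK_Un_card: "card (JK c (k - 1) \<union> JK c k) = 2 * n - sc M n k"
  using card_Un_Int[OF JK_fin JK_fin, of c "k - 1" c k] JK_Int[of c k] JK_card by simp

lemma JK_Un_card2: "c \<noteq> c' \<Longrightarrow> card (JK c k \<union> JK c' k') = 2 * n"
  using card_Un_disjoint[OF JK_fin JK_fin JK_disj, of c c' k k'] JK_card by simp

definition kept :: "nat \<Rightarrow> 'a \<Rightarrow> nat \<Rightarrow> bool" where
  "kept c \<omega> k \<longleftrightarrow> (\<forall>j\<in>{1..n}. xi c (j, k div M ^ (n - j)) \<omega>)"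

lemma cyl_JK: "\<omega> \<in> cyl (JK c k) \<longleftrightarrow> \<omega> \<in> space P \<and> kept c \<omega> k"
  by (auto simp: cyl_def JK_def kept_def X_def)

lemma percol_Uset: "percol_step M (\<lambda>x. xi c x \<omega>) n = Uset (real M ^ n) (M ^ n) (kept c \<omega>)"
  unfolding percol_step_def Uset_def grid_interval_def kept_def by simp


abbreviation "NN \<equiv> M ^ n"
abbreviation "DD \<equiv> real M ^ n"

lemma DD_pos: "DD > 0" using M2 by simp
lemma NN_pos: "NN \<ge> 1" using M2 by simp

abbreviation SS :: "'a \<Rightarrow> real set" where
  "SS \<omega> \<equiv> percol_step M (\<lambda>x. xi 1 x \<omega>) n \<inter> percol_step M (\<lambda>x. xi 2 x \<omega>) n"

lemma V1_point: "V1 (SS \<omega>) = (\<Sum>k<NN. if kept 1 \<omega> k \<and> kept 2 \<omega> k then 1 / DD else 0)"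
proof -
  interpret g: gridset "Uset DD NN (kept 1 \<omega>) \<inter> Uset DD NN (kept 2 \<omega>)" DD NN
     "\<lambda>k. (k < NN \<and> kept 1 \<omega> k \<or> 0 < k \<and> kept 1 \<omega> (k - 1)) \<and> (k < NN \<and> kept 2 \<omega> k \<or> 0 < k \<and> kept 2 \<omega> (k - 1))"
     "\<lambda>k. kept 1 \<omega> k \<and> kept 2 \<omega> k"
    by (rule gridset_inter[OF DD_pos])
  show ?thesis unfolding V1_def percol_Uset g.measure_S ..
qed

lemma real_card_filter: "real (card {k \<in> A. Q k}) = (\<Sum>k\<in>A. if Q k then 1 else 0)" if "finite A"
  using that by (simp add: sum.If_cases Int_def)

lemma V0_point: "V0 (SS \<omega>) = (if kept 1 \<omega> 0 \<and> kept 2 \<omega> 0 then 1 else 0) +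
   (\<Sum>k\<in>{1..<NN}. if (kept 1 \<omega> k \<or> kept 1 \<omega> (k - 1)) \<and> (kept 2 \<omega> k \<or> kept 2 \<omega> (k - 1))
        \<and> \<not> (kept 1 \<omega> (k - 1) \<and> kept 2 \<omega> (k - 1)) then 1 else 0)"
proof -
  define a where "a = kept 1 \<omega>"
  define b where "b = kept 2 \<omega>"
  interpret g: gridset "Uset DD NN a \<inter> Uset DD NN b" DD NN
     "\<lambda>k. (k < NN \<and> a k \<or> 0 < k \<and> a (k - 1)) \<and> (k < NN \<and> b k \<or> 0 < k \<and> b (k - 1))"
     "\<lambda>k. a k \<and> b k"
    by (rule gridset_inter[OF DD_pos])
  define f where "f k = (if g.L k then 1 else (0::real))" for k
  have "{k. g.L k} = {k \<in> {..NN}. g.L k}" unfolding g.L_def by auto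
  then have "V0 (SS \<omega>) = real (card {k \<in> {..NN}. g.L k})"
    unfolding V0_def percol_Uset a_def[symmetric] b_def[symmetric] g.card_components
    by simp
  also have "\<dots> = (\<Sum>k\<in>{..NN}. f k)"
    unfolding f_def by (rule real_card_filter) simp
  also have "\<dots> = (\<Sum>k\<in>{0..<NN}. f k) + f NN"
    by (simp add: atLeast0_lessThan_Suc atLeast0AtMost[symmetric] flip: atLeastLessThanSuc_atLeastAtMost)
  also have "(\<Sum>k\<in>{0..<NN}. f k) = f 0 + (\<Sum>k\<in>{Suc 0..<NN}. f k)"
    using NN_pos M2 by (intro sum.atLeast_Suc_lessThan) simp
  also have "f NN = 0" using NN_pos unfolding f_def g.L_def by auto
  also have "f 0 = (if a 0 \<and> b 0 then 1 else 0)" using NN_pos M2 unfolding f_def g.L_def by auto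
  also have "(\<Sum>k\<in>{Suc 0..<NN}. f k) = (\<Sum>k\<in>{1..<NN}. if (a k \<or> a (k - 1)) \<and> (b k \<or> b (k - 1))
        \<and> \<not> (a (k - 1) \<and> b (k - 1)) then 1 else 0)"
    unfolding f_def g.L_def by (intro sum.cong) auto
  finally show ?thesis by (simp add: a_def b_def)
qed

definition BB :: "nat \<Rightarrow> 'a set" where
  "BB k = cyl (JK 1 k) \<inter> cyl (JK 2 k)"

definition EV :: "nat \<Rightarrow> 'a set" where
  "EV k = (cyl (JK 1 (k - 1)) \<union> cyl (JK 1 k)) \<inter> (cyl (JK 2 (k - 1)) \<union> cyl (JK 2 k)) - BB (k - 1)"

lemma cylJK_ev: "c \<in> {1, 2} \<Longrightarrow> k < NN \<Longrightarrow> cyl (JK c k) \<in> events"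
  by (intro cyl_events JK_fin JK_sub)

lemma cylJK_prob: "c \<in> {1, 2} \<Longrightarrow> k < NN \<Longrightarrow> prob (cyl (JK c k)) = p ^ n"
  using cyl_prob[OF JK_fin JK_sub] JK_card by simp

lemma BB_ev: "k < NN \<Longrightarrow> BB k \<in> events"
  unfolding BB_def using cylJK_ev by auto

lemma BB_prob: "k < NN \<Longrightarrow> prob (BB k) = p ^ (2 * n)"
proof -
  assume k: "k < NN"
  have "prob (BB k) = prob (cyl (JK 1 k \<union> JK 2 k))" by (simp add: BB_def cyl_Int)
  also have "\<dots> = p ^ card (JK 1 k \<union> JK 2 k)"
    using k JK_sub[of 1 k] JK_sub[of 2 k] by (intro cyl_prob) (auto simp: JK_fin)
  also have "card (JK 1 k \<union> JK 2 k) = 2 * n" by (rule JK_Un_card2) simp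
  finally show ?thesis .
qed

lemma cross_prob:
  assumes "U \<in> {cyl (JK 1 k1), cyl (JK 1 k2), cyl (JK 1 k1) \<inter> cyl (JK 1 k2)}"
    and "V \<in> {cyl (JK 2 k1), cyl (JK 2 k2), cyl (JK 2 k1) \<inter> cyl (JK 2 k2)}"
    and "k1 < NN" "k2 < NN"
  shows "prob (U \<inter> V) = prob U * prob V"
proof -
  obtain A where A: "U = cyl A" "A \<subseteq> JK 1 k1 \<union> JK 1 k2" "finite A" "A \<subseteq> IX"
    using assms(1) JK_sub[of 1 k1] JK_sub[of 1 k2] assms(3,4)
    by (auto simp: cyl_Int JK_fin)
  obtain B where B: "V = cyl B" "B \<subseteq> JK 2 k1 \<union> JK 2 k2" "finite B" "B \<subseteq> IX"
    using assms(2) JK_sub[of 2 k1] JK_sub[of 2 k2] assms(3,4)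
    by (auto simp: cyl_Int JK_fin)
  have d: "JK 1 k \<inter> JK 2 k' = {}" for k k' by (rule JK_disj) simp
  have "A \<inter> B = {}" using A(2) B(2) d[of k1 k1] d[of k1 k2] d[of k2 k1] d[of k2 k2] by blast
  then have "card (A \<union> B) = card A + card B" using A B by (simp add: card_Un_disjoint)
  then show ?thesis using A B by (simp add: cyl_Int cyl_prob power_add)
qed

lemma EV_ev: "1 \<le> k \<Longrightarrow> k < NN \<Longrightarrow> EV k \<in> events"
  unfolding EV_def using cylJK_ev BB_ev by auto

lemma EV_prob:
  assumes k: "1 \<le> k" "k < NN"
  shows "prob (EV k) = (2 * p ^ n - p ^ (2 * n - sc M n k)) ^ 2 - p ^ (2 * n)"
proof -
  have k1: "k - 1 < NN" using k by simp
  have union: "prob (cyl (JK c (k - 1)) \<union> cyl (JK c k)) = 2 * p ^ n - p ^ (2 * n - sc M n k)"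
    if c: "c \<in> {1, 2}" for c
  proof -
    have "prob (cyl (JK c (k - 1)) \<union> cyl (JK c k)) = p ^ n + p ^ n - prob (cyl (JK c (k - 1) \<union> JK c k))"
      using prob_Un3[OF cylJK_ev[OF c k1] cylJK_ev[OF c k(2)]] cylJK_prob[OF c k1] cylJK_prob[OF c k(2)]
      by (simp add: cyl_Int)
    also have "prob (cyl (JK c (k - 1) \<union> JK c k)) = p ^ (2 * n - sc M n k)"
      using cyl_prob[of "JK c (k - 1) \<union> JK c k"] JK_sub[OF c k1] JK_sub[OF c k(2)] JK_Un_card[of c k]
      by (simp add: JK_fin)
    finally show ?thesis by simp
  qed
  have "prob (EV k) = prob ((cyl (JK 1 (k - 1)) \<union> cyl (JK 1 k)) \<inter> (cyl (JK 2 (k - 1)) \<union> cyl (JK 2 k)))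
      - prob (BB (k - 1))"
    unfolding EV_def
    by (rule finite_measure_Diff) (use cylJK_ev BB_ev k1 k in \<open>auto simp: BB_def\<close>)
  also have "prob ((cyl (JK 1 (k - 1)) \<union> cyl (JK 1 k)) \<inter> (cyl (JK 2 (k - 1)) \<union> cyl (JK 2 k)))
     = prob (cyl (JK 1 (k - 1)) \<union> cyl (JK 1 k)) * prob (cyl (JK 2 (k - 1)) \<union> cyl (JK 2 k))"
    by (rule prod_union) (use cylJK_ev k1 k cross_prob[OF _ _ k1 k(2)] in auto)
  finally show ?thesis using union[of 1] union[of 2] BB_prob[OF k1] by (simp add: power2_eq_square)
qed

lemma ind_BB: "\<omega> \<in> space P \<Longrightarrow> (if kept 1 \<omega> k \<and> kept 2 \<omega> k then 1 else 0) = (indicator (BB k) \<omega> :: real)"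
  by (simp add: BB_def cyl_JK indicator_def)

lemma ind_EV: "\<omega> \<in> space P \<Longrightarrow>
  (if (kept 1 \<omega> k \<or> kept 1 \<omega> (k - 1)) \<and> (kept 2 \<omega> k \<or> kept 2 \<omega> (k - 1))
        \<and> \<not> (kept 1 \<omega> (k - 1) \<and> kept 2 \<omega> (k - 1)) then 1 else 0) = (indicator (EV k) \<omega> :: real)"
  by (auto simp: EV_def BB_def cyl_JK indicator_def)

lemma E_V1: "expectation (\<lambda>\<omega>. V1 (SS \<omega>)) = p ^ (2 * n)"
proof -
  have "expectation (\<lambda>\<omega>. V1 (SS \<omega>)) = expectation (\<lambda>\<omega>. \<Sum>k<NN. (1 / DD) * indicator (BB k) \<omega>)"
  proof (intro Bochner_Integration.integral_cong refl)
    fix \<omega> assume \<omega>: "\<omega> \<in> space P"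
    have "(if kept 1 \<omega> k \<and> kept 2 \<omega> k then 1 / DD else 0) = 1 / DD * indicator (BB k) \<omega>" for k
      using ind_BB[OF \<omega>, of k, symmetric] by simp
    then show "V1 (SS \<omega>) = (\<Sum>k<NN. 1 / DD * indicator (BB k) \<omega>)"
      unfolding V1_point by simp
  qed
  also have "\<dots> = (\<Sum>k<NN. (1 / DD) * prob (BB k))"
  proof -
    have intA: "integrable P (indicator A :: 'a \<Rightarrow> real)" if "A \<in> events" for A
      using that by (simp add: integrable_indicator_iff sets.Int_space_eq2 less_top[symmetric])
    have "expectation (\<lambda>\<omega>. \<Sum>k<NN. (1 / DD) * indicator (BB k) \<omega>)
        = (\<Sum>k<NN. expectation (\<lambda>\<omega>. (1 / DD) * indicator (BB k) \<omega>))"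
      by (rule Bochner_Integration.integral_sum) (use intA BB_ev in auto)
    also have "\<dots> = (\<Sum>k<NN. (1 / DD) * prob (BB k))"
      using BB_ev by (intro sum.cong refl) (simp add: sets.Int_space_eq2)
    finally show ?thesis .
  qed
  also have "\<dots> = (\<Sum>k<NN. (1 / DD) * p ^ (2 * n))"
    by (intro sum.cong) (auto simp: BB_prob)
  also have "\<dots> = p ^ (2 * n)" using DD_pos by simp
  finally show ?thesis .
qed

lemma E_V0: "expectation (\<lambda>\<omega>. V0 (SS \<omega>)) = p ^ (2 * n) +
    (\<Sum>k\<in>{1..<NN}. (2 * p ^ n - p ^ (2 * n - sc M n k)) ^ 2 - p ^ (2 * n))"
proof -
  have "expectation (\<lambda>\<omega>. V0 (SS \<omega>)) = expectation (\<lambda>\<omega>. indicator (BB 0) \<omega> + (\<Sum>k\<in>{1..<NN}. indicator (EV k) \<omega>))"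
  proof (intro Bochner_Integration.integral_cong refl)
    fix \<omega> assume \<omega>: "\<omega> \<in> space P"
    show "V0 (SS \<omega>) = indicator (BB 0) \<omega> + (\<Sum>k\<in>{1..<NN}. indicator (EV k) \<omega>)"
      unfolding V0_point ind_BB[OF \<omega>] ind_EV[OF \<omega>] by (rule refl)
  qed
  also have "\<dots> = prob (BB 0) + (\<Sum>k\<in>{1..<NN}. prob (EV k))"
  proof -
    have intA: "integrable P (indicator A :: 'a \<Rightarrow> real)" if "A \<in> events" for A
      using that by (simp add: integrable_indicator_iff sets.Int_space_eq2 less_top[symmetric])
    have eA: "expectation (indicator A :: 'a \<Rightarrow> real) = prob A" if "A \<in> events" for A
      using that by (simp add: sets.Int_space_eq2)
    have b0: "BB 0 \<in> events" by (intro BB_ev) (use NN_pos in linarith)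
    have ek: "k \<in> {1..<NN} \<Longrightarrow> EV k \<in> events" for k using EV_ev by auto
    have "expectation (\<lambda>\<omega>. indicator (BB 0) \<omega> + (\<Sum>k\<in>{1..<NN}. indicator (EV k) \<omega>) :: real)
       = expectation (indicator (BB 0)) + expectation (\<lambda>\<omega>. \<Sum>k\<in>{1..<NN}. indicator (EV k) \<omega> :: real)"
      by (rule Bochner_Integration.integral_add) (use intA b0 ek in auto)
    also have "expectation (\<lambda>\<omega>. \<Sum>k\<in>{1..<NN}. indicator (EV k) \<omega> :: real)
       = (\<Sum>k\<in>{1..<NN}. expectation (indicator (EV k)))"
      by (rule Bochner_Integration.integral_sum) (use intA ek in auto)
    also have "\<dots> = (\<Sum>k\<in>{1..<NN}. prob (EV k))"
      by (intro sum.cong refl eA ek)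
    finally show ?thesis using eA[OF b0] by simp
  qed
  also have "\<dots> = p ^ (2 * n) + (\<Sum>k\<in>{1..<NN}. (2 * p ^ n - p ^ (2 * n - sc M n k)) ^ 2 - p ^ (2 * n))"
    using BB_prob[of 0] NN_pos M2 by (simp add: EV_prob)
  finally show ?thesis .
qed

lemma E_V0_closed: "expectation (\<lambda>\<omega>. V0 (SS \<omega>)) = (real M * p^2) ^ n *
           (3 - 2 / real M ^ n
              - 4 * p * (real M - 1) / (real M - p) * (1 - (p / real M) ^ n)
              + (real M - 1) * p^2 / (real M - p^2) * (1 - (p^2 / real M) ^ n))"
proof -
  have trm: "(2 * p ^ n - p ^ (2 * n - sc M n k)) ^ 2 - p ^ (2 * n)
      = p ^ (2 * n) * (3 - 4 * p ^ (n - sc M n k) + (p\<^sup>2) ^ (n - sc M n k))" for k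
  proof -
    have "2 * n - sc M n k = n + (n - sc M n k)" using sc_le[of M n k] by simp
    then have "p ^ (2 * n - sc M n k) = p ^ n * p ^ (n - sc M n k)" by (simp add: power_add)
    moreover have "p ^ (2 * n) = (p ^ n)\<^sup>2" by (simp add: power_mult mult.commute flip: power_mult)
    moreover have "(p\<^sup>2) ^ (n - sc M n k) = (p ^ (n - sc M n k))\<^sup>2" by (simp flip: power_mult add: mult.commute)
    ultimately show ?thesis by (simp add: power2_eq_square algebra_simps)
  qed
  have Mp: "p \<noteq> real M" using M2 p1 by simp
  have p2: "p\<^sup>2 \<le> 1" using p0 p1 by (simp add: power_le_one)
  have Mp2: "p\<^sup>2 \<noteq> real M" using M2 p2 by simp
  have cardN: "real (card {1..<NN}) = real M ^ n - 1" using NN_pos by (simp add: of_nat_diff)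
  have "(\<Sum>k\<in>{1..<NN}. (2 * p ^ n - p ^ (2 * n - sc M n k)) ^ 2 - p ^ (2 * n))
      = p ^ (2 * n) * (3 * real (card {1..<NN}) - 4 * (\<Sum>k\<in>{1..<NN}. p ^ (n - sc M n k))
          + (\<Sum>k\<in>{1..<NN}. (p\<^sup>2) ^ (n - sc M n k)))"
    unfolding trm by (simp add: sum_distrib_left sum_subtractf sum.distrib algebra_simps)
  also have "(\<Sum>k\<in>{1..<NN}. p ^ (n - sc M n k)) = (real M - 1) * p * (real M ^ n - p ^ n) / (real M - p)"
    using H_closed[OF M2, of p n] H_form[OF Mp, of n] by simp
  also have "(\<Sum>k\<in>{1..<NN}. (p\<^sup>2) ^ (n - sc M n k)) = (real M - 1) * p\<^sup>2 * (real M ^ n - (p\<^sup>2) ^ n) / (real M - p\<^sup>2)"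
    using H_closed[OF M2, of "p\<^sup>2" n] H_form[OF Mp2, of n] by simp
  finally have S: "(\<Sum>k\<in>{1..<NN}. (2 * p ^ n - p ^ (2 * n - sc M n k)) ^ 2 - p ^ (2 * n))
      = p ^ (2 * n) * (3 * (real M ^ n - 1) - 4 * ((real M - 1) * p * (real M ^ n - p ^ n) / (real M - p))
          + (real M - 1) * p\<^sup>2 * (real M ^ n - (p\<^sup>2) ^ n) / (real M - p\<^sup>2))"
    unfolding cardN .
  show ?thesis unfolding E_V0 S by (rule final_alg[OF M2 p0 p1])
qed

end

theorem proposition4p4:
  fixes P :: "'a measure" and M :: nat and p :: real
    and xi :: "nat \<Rightarrow> nat \<times> nat \<Rightarrow> 'a \<Rightarrow> bool"
  assumes "prob_space P"
    and "M \<ge> 2" and "0 \<le> p" and "p \<le> 1"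
    and "prob_space.indep_vars P (\<lambda>_. count_space UNIV) (\<lambda>(c, j, i). xi c (j, i))
           {(c, j, i). c \<in> {1, 2} \<and> 1 \<le> j \<and> i < M ^ j}"
    and "\<And>c j i. c \<in> {1, 2} \<Longrightarrow> 1 \<le> j \<Longrightarrow> i < M ^ j \<Longrightarrow>
           measure P {\<omega> \<in> space P. xi c (j, i) \<omega>} = p"
  shows "prob_space.expectation P
           (\<lambda>\<omega>. V1 (percol_step M (\<lambda>x. xi 1 x \<omega>) n \<inter> percol_step M (\<lambda>x. xi 2 x \<omega>) n))
         = p ^ (2 * n) \<and>
         prob_space.expectation P
           (\<lambda>\<omega>. V0 (percol_step M (\<lambda>x. xi 1 x \<omega>) n \<inter> percol_step M (\<lambda>x. xi 2 x \<omega>) n))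
         = (real M * p^2) ^ n *
           (3 - 2 / real M ^ n
              - 4 * p * (real M - 1) / (real M - p) * (1 - (p / real M) ^ n)
              + (real M - 1) * p^2 / (real M - p^2) * (1 - (p^2 / real M) ^ n))"
proof -
  interpret perc P M p xi n
    using assms by (intro perc.intro perc_axioms.intro) auto
  show ?thesis using E_V1 E_V0_closed by simp
qed

end
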